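(* If $x=re^{i\theta}\in C$ and $M_x$ is minimal in the sphere $S^{n+1}(r)$, then $$\|A^E(x)\|^2=\frac{ng}{r^2},\qquad \|A^S(x)\|^2=\frac{n}{r^2}(g-1).$$
   Context: Let $M^n$ be a compact isoparametric hypersurface in the unit sphere $S^{n+1}\subset\mathbb{R}^{n+2}$ (constant principal curvatures) with $g$ distinct principal curvatures; then $g\in\{1,2,3,4,6\}$. Fix $x_0\in M$ and identify the 2-dimensional normal space $\nu_{x_0}M$ of $M$ in $\mathbb{R}^{n+2}$ with $\mathbb{C}$ so that the two focal submanifolds $M_+$, $M_-$ ($\dim M_+\le\dim M_-$) meet the normal circle at $1$ and $e^{i\pi/g}$ (the intersection points closest to $x_0$). The Weyl chamber is $C=\{re^{i\theta}:r>0,\ 0<\theta<\pi/g\}$. For $k=1,\dots,g$ let $\theta_k=k\pi/g-\pi/2$, $\alpha_k=e^{i\theta_k}$, and $m_k=m_1$ for $k$ odd, $m_k=m_2$ for $k$ even, where $(m_1,m_2)$, $m_1\le m_2$, is the multiplicity data of the principal curvatures; $m_1=m_2$ if $g$ is odd, and $(m_1+m_2)g=2n$. For $x\in C$, $M_x=\{p+\tilde\xi(p):p\in M\}$ where $\tilde\xi$ is the parallel normal field on $M$ with $\tilde\xi(x_0)=x-x_0$; it is an $n$-dimensional isoparametric submanifold of $\mathbb{R}^{n+2}$ lying in $S^{n+1}(|x|)$, with normal space $\nu_{x_0}M$ at $x$, and $T_xM_x=\oplus_kE_k$, $\dim E_k=m_k$, with Euclidean shape operator $A_\xi|_{E_k}=\langle\xi,-\alpha_k/\langle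 x,\alpha_k\rangle\rangle\mathrm{Id}$ ($\langle\cdot,\cdot\rangle$ the real inner product on $\mathbb{C}=\mathbb{R}^2$). $H^E(x),A^E(x)$ denote mean curvature vector and shape operator of $M_x$ at $x$ in $\mathbb{R}^{n+2}$; $H^S(x),A^S(x)$ those of $M_x$ as a hypersurface of $S^{n+1}(|x|)$; $\|A\|^2$ is the sum of squared Hilbert–Schmidt norms over an orthonormal normal basis. Set $\delta=(m_2-m_1)/(m_2+m_1)$ if $g\ge2$ and $\delta=0$ if $g=1$, and let $\theta_{\min}\in(0,\pi/g)$ be defined by $\cos g\theta_{\min}=-\delta$. *)

theory Defs
  imports "HOL-Analysis.Analysis"
begin

text \<open>The normal plane of M at x0 is identified with the complex plane;
  the real inner product on it is the inner product of type complex.\<close>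

definition alpha :: "nat \<Rightarrow> nat \<Rightarrow> complex" where
  "alpha g k = cis (real k * pi / real g - pi / 2)"

definition mult :: "nat \<Rightarrow> nat \<Rightarrow> nat \<Rightarrow> nat" where
  "mult m1 m2 k = (if odd k then m1 else m2)"

definition weyl_chamber :: "nat \<Rightarrow> complex set" where
  "weyl_chamber g = {rcis r t | r t. r > 0 \<and> 0 < t \<and> t < pi / real g}"

text \<open>Eigenvalue of the Euclidean shape operator A_xi of M_x on E_k.\<close>
definition shape_eig :: "nat \<Rightarrow> complex \<Rightarrow> complex \<Rightarrow> nat \<Rightarrow> real" where
  "shape_eig g x \<xi> k = \<xi> \<bullet> (- alpha g k / complex_of_real (x \<bullet> alpha g k))"

text \<open>Squared Hilbert-Schmidt norm of A_xi on T_x M_x = direct sum of E_k, dim E_k = m_k.\<close>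
definition hs_sq :: "nat \<Rightarrow> nat \<Rightarrow> nat \<Rightarrow> complex \<Rightarrow> complex \<Rightarrow> real" where
  "hs_sq g m1 m2 x \<xi> = (\<Sum>k=1..g. real (mult m1 m2 k) * (shape_eig g x \<xi> k)^2)"

definition shape_trace :: "nat \<Rightarrow> nat \<Rightarrow> nat \<Rightarrow> complex \<Rightarrow> complex \<Rightarrow> real" where
  "shape_trace g m1 m2 x \<xi> = (\<Sum>k=1..g. real (mult m1 m2 k) * shape_eig g x \<xi> k)"

definition dimM :: "nat \<Rightarrow> nat \<Rightarrow> nat \<Rightarrow> nat" where
  "dimM g m1 m2 = (\<Sum>k=1..g. mult m1 m2 k)"

text \<open>||A^E(x)||^2: sum over an orthonormal basis of the normal space nu (= C).\<close>
definition normsq_AE :: "nat \<Rightarrow> nat \<Rightarrow> nat \<Rightarrow> complex \<Rightarrow> real" where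
  "normsq_AE g m1 m2 x = (\<Sum>\<xi>\<in>Basis. hs_sq g m1 m2 x \<xi>)"

text \<open>Unit normal of M_x in the sphere S^{n+1}(|x|) at x: the unit vector of nu orthogonal to x.
  The shape operator of M_x in the sphere w.r.t. this normal equals the Euclidean A_eta.\<close>
definition sphere_normal :: "complex \<Rightarrow> complex" where
  "sphere_normal x = \<i> * x / complex_of_real (cmod x)"

definition normsq_AS :: "nat \<Rightarrow> nat \<Rightarrow> nat \<Rightarrow> complex \<Rightarrow> real" where
  "normsq_AS g m1 m2 x = hs_sq g m1 m2 x (sphere_normal x)"

definition mean_curv_S :: "nat \<Rightarrow> nat \<Rightarrow> nat \<Rightarrow> complex \<Rightarrow> complex" where
  "mean_curv_S g m1 m2 x =
     complex_of_real (shape_trace g m1 m2 x (sphere_normal x) / real (dimM g m1 m2)) * sphere_normal x"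

end

theory Submission
  imports Defs
begin


lemma tan_shift:
  fixes a d C S w :: real
  assumes ca: "cos a \<noteq> 0" and w: "w \<noteq> 0" and cd: "cos d = C*w" and sd: "sin d = S*w"
  shows "tan (a+d) = (tan a * C + S)/(C - tan a * S)"
    and "cos (a+d) \<noteq> 0 \<Longrightarrow> C - tan a * S \<noteq> 0"
proof -
  have cad: "cos (a+d) = cos a * w * (C - tan a * S)"
    using ca by (simp add: cos_add cd sd tan_def field_simps)
  have sad: "sin (a+d) = cos a * w * (tan a * C + S)"
    using ca by (simp add: sin_add cd sd tan_def field_simps)
  show "tan (a+d) = (tan a * C + S)/(C - tan a * S)"
    using ca w by (simp add: tan_def cad sad)
  show "cos (a+d) \<noteq> 0 \<Longrightarrow> C - tan a * S \<noteq> 0" using cad by auto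
qed

lemma cos_phi_pos:
  fixes g k :: nat and t :: real
  assumes "1 \<le> k" "k \<le> g" "0 < t" "t < pi / real g"
  shows "0 < cos (t + pi/2 - real k * pi / real g)"
proof (rule cos_gt_zero_pi)
  have g0: "real g > 0" using assms by simp
  have "real k * pi / real g \<le> pi" using assms g0 by (simp add: field_simps)
  thus "-(pi/2) < t + pi/2 - real k * pi / real g" using assms by simp
  have "pi / real g \<le> real k * pi / real g" using assms g0 by (simp add: field_simps)
  thus "t + pi/2 - real k * pi / real g < pi/2" using assms by linarith
qed



lemma shift_inst:
  fixes a d w C S \<phi> :: real
  assumes "cos a \<noteq> 0" "w \<noteq> 0" "cos d = C*w" "sin d = S*w" "\<phi> = a + d" "cos \<phi> \<noteq> 0"
  shows "tan \<phi> = (tan a * C + S)/(C - tan a * S) \<and> C - tan a * S \<noteq> 0"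
  using tan_shift[OF assms(1-4)] assms(5,6) by auto

lemma cs56: "cos (5*pi/6) = - sqrt 3 * (1/2)" "sin (5*pi/6) = 1 * (1/2)"
proof -
  have e: "5*pi/6 = pi - pi/6" by simp
  show "cos (5*pi/6) = - sqrt 3 * (1/2)" by (subst e, simp only: cos_pi_minus sin_pi_minus cos_30 mult_1 mult_minus_left times_divide_eq_right)
  show "sin (5*pi/6) = 1 * (1/2)" by (subst e, simp only: cos_pi_minus sin_pi_minus sin_30 mult_1 mult_minus_left times_divide_eq_right)
qed
lemma cs23: "cos (2*pi/3) = - 1 * (1/2)" "sin (2*pi/3) = sqrt 3 * (1/2)"
proof -
  have e: "2*pi/3 = pi - pi/3" by simp
  show "cos (2*pi/3) = - 1 * (1/2)" by (subst e, simp only: cos_pi_minus sin_pi_minus cos_60 mult_1 mult_minus_left times_divide_eq_right)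
  show "sin (2*pi/3) = sqrt 3 * (1/2)" by (subst e, simp only: cos_pi_minus sin_pi_minus sin_60 mult_1 mult_minus_left times_divide_eq_right)
qed
lemma cs34: "cos (3*pi/4) = - 1 * (sqrt 2/2)" "sin (3*pi/4) = 1 * (sqrt 2/2)"
proof -
  have e: "3*pi/4 = pi - pi/4" by simp
  show "cos (3*pi/4) = - 1 * (sqrt 2/2)" by (subst e, simp only: cos_pi_minus sin_pi_minus cos_45 mult_1 mult_minus_left times_divide_eq_right)
  show "sin (3*pi/4) = 1 * (sqrt 2/2)" by (subst e, simp only: cos_pi_minus sin_pi_minus sin_45 mult_1 mult_minus_left times_divide_eq_right)
qed
lemma cs12: "cos (pi/2) = 0 * 1" "sin (pi/2) = 1 * 1" by simp_all
lemma cs13: "cos (pi/3) = 1 * (1/2)" "sin (pi/3) = sqrt 3 * (1/2)" by (simp_all add: cos_60 sin_60)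
lemma cs16: "cos (pi/6) = sqrt 3 * (1/2)" "sin (pi/6) = 1 * (1/2)" by (simp_all add: cos_30 sin_30)
lemma cs14: "cos (pi/4) = 1 * (sqrt 2/2)" "sin (pi/4) = 1 * (sqrt 2/2)" by (simp_all add: cos_45 sin_45)

lemma setup_lem:
  fixes t :: real and g :: nat
  assumes "0 < t" "t < pi / real g" "g \<ge> 1"
  shows "cos (t - pi/2) \<noteq> 0"
    and "\<And>k. 1 \<le> k \<Longrightarrow> k \<le> g \<Longrightarrow> cos (t + pi/2 - real k*pi/real g) \<noteq> 0"
proof -
  have "pi / real g \<le> pi" using assms by (simp add: field_simps)
  hence "0 < sin t" using assms by (intro sin_gt_zero) auto
  thus "cos (t - pi/2) \<noteq> 0" by (simp add: cos_diff)
  show "\<And>k. 1 \<le> k \<Longrightarrow> k \<le> g \<Longrightarrow> cos (t + pi/2 - real k*pi/real g) \<noteq> 0"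
    using cos_phi_pos assms by (metis less_irrefl)
qed



lemma grp3:
  fixes T q :: real assumes q: "q^2 = 3" and d1: "1 - q*T \<noteq> 0" and d2: "1 + q*T \<noteq> 0"
  defines "V \<equiv> T*(3-T^2)/(1-3*T^2)"
  shows "T + (T+q)/(1-q*T) + (T-q)/(1+q*T) = 3*V"
    and "T^2 + ((T+q)/(1-q*T))^2 + ((T-q)/(1+q*T))^2 = 6 + 9*V^2"
proof -
  define D where "D = 1 - 3*T^2"
  have DD: "D = (1-q*T)*(1+q*T)" unfolding D_def using q by (simp add: algebra_simps power2_eq_square)
  have D0: "D \<noteq> 0" using DD d1 d2 by simp
  have e1: "(T+q)/(1-q*T) = (4*T + q*(1+T^2))/D"
    using d1 D0 q unfolding DD by (simp add: field_simps power2_eq_square, (simp add: algebra_simps)?)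
  have e2: "(T-q)/(1+q*T) = (4*T - q*(1+T^2))/D"
    using d2 D0 q unfolding DD by (simp add: field_simps power2_eq_square, (simp add: algebra_simps)?)
  have V: "V = T*(3-T^2)/D" unfolding V_def D_def ..
  show "T + (T+q)/(1-q*T) + (T-q)/(1+q*T) = 3*V"
    unfolding e1 e2 V using D0 by (simp add: field_simps, (simp add: D_def algebra_simps power2_eq_square)?)
  show "T^2 + ((T+q)/(1-q*T))^2 + ((T-q)/(1+q*T))^2 = 6 + 9*V^2"
    unfolding e1 e2 V using D0 q by (simp add: field_simps, (simp add: D_def algebra_simps power2_eq_square)?)
qed

lemma alg6:
  fixes T q m1 m2 :: real
  assumes q2: "q^2 = 3" and T0: "T \<noteq> 0" and d1: "1 - q*T \<noteq> 0" and d2: "1 + q*T \<noteq> 0"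
    and d3: "q + T \<noteq> 0" and d4: "q - T \<noteq> 0"
    and h: "m1 * A1 + m2 * A2 + m1 * A3 + m2 * A4 + m1 * A5 + m2 * T = 0"
    and A1: "A1 = (T*(-q)+1)/(-q-T*1)" and A2: "A2 = (T*(-1)+q)/(-1-T*q)"
    and A3: "A3 = (T*0+1)/(0-T*1)" and A4: "A4 = (T*1+q)/(1-T*q)" and A5: "A5 = (T*q+1)/(q-T*1)"
  shows "m1 * A1^2 + m2 * A2^2 + m1 * A3^2 + m2 * A4^2 + m1 * A5^2 + m2 * T^2 = 15*(m1+m2)"
proof -
  define U where "U = -1/T"
  have A4': "A4 = (T+q)/(1-q*T)" unfolding A4 by (simp add: mult.commute)
  have A2': "A2 = (T-q)/(1+q*T)" unfolding A2 using d2
    by (simp add: field_simps) (simp add: algebra_simps)?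
  have A3': "A3 = U" unfolding A3 U_def by simp
  have A1a: "A1 = (q*T - 1)/(T+q)" unfolding A1 using d3
    by (simp add: field_simps add.commute) (simp add: algebra_simps)?
  have u1: "U + q = (q*T-1)/T" "1 - q*U = (T+q)/T" unfolding U_def using T0 by (simp_all add: field_simps)
  have A1b: "(U+q)/(1-q*U) = (q*T - 1)/(T+q)" unfolding u1 using T0 by simp
  have A1': "A1 = (U+q)/(1-q*U)" using A1a A1b by simp
  have u2: "U - q = (-(q*T+1))/T" "1 + q*U = (T-q)/T" unfolding U_def using T0 by (simp_all add: field_simps)
  have A5b: "(U-q)/(1+q*U) = (-(q*T+1))/(T-q)" unfolding u2 using T0 by simp
  have A5a: "A5 = (-(q*T+1))/(T-q)" unfolding A5 using d4
    by (simp add: field_simps add.commute) (simp add: algebra_simps)?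
  have A5': "A5 = (U-q)/(1+q*U)" using A5a A5b by simp
  have e1: "1 - q*U \<noteq> 0" unfolding U_def using T0 d3 by (simp add: field_simps add.commute)
  have e2: "1 + q*U \<noteq> 0" unfolding U_def using T0 d4 by (simp add: field_simps)
  define V where "V = T*(3-T^2)/(1-3*T^2)"
  define W where "W = U*(3-U^2)/(1-3*U^2)"
  have s1: "T + A4 + A2 = 3*V" "T^2 + A4^2 + A2^2 = 6 + 9*V^2"
    using grp3[OF q2 d1 d2] unfolding A4' A2' V_def by simp_all
  have s2: "A3 + A1 + A5 = 3*W" "A3^2 + A1^2 + A5^2 = 6 + 9*W^2"
    using grp3[OF q2 e1 e2] unfolding A1' A5' A3' W_def by simp_all
  have t3: "3 - T^2 \<noteq> 0"
  proof
    assume "3 - T^2 = 0"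
    hence "(q - T)*(q+T) = 0" using q2 by (simp add: algebra_simps power2_eq_square)
    thus False using d3 d4 by simp
  qed
  have t4: "1 - 3*T^2 \<noteq> 0"
  proof
    assume "1 - 3*T^2 = 0"
    hence "(1 - q*T)*(1+q*T) = 0" using q2 by (simp add: algebra_simps power2_eq_square power_mult_distrib)
    thus False using d1 d2 by simp
  qed
  have V0: "V \<noteq> 0" unfolding V_def using T0 t3 t4 by simp
  have WV: "W = -1/V" unfolding W_def V_def U_def using T0 t3 t4
    by (simp add: field_simps power2_eq_square) (simp add: algebra_simps)?
  have hh: "m2 * (3*V) + m1 * (3*W) = 0" proof -
    have "m2 * (3*V) + m1 * (3*W) = m2*(T + A4 + A2) + m1*(A3 + A1 + A5)" using s1(1) s2(1) by simp
    also have "\<dots> = 0" using h by (simp add: algebra_simps)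
    finally show ?thesis .
  qed
  hence "m2 * V^2 = m1" unfolding WV using V0 by (simp add: field_simps power2_eq_square)
  hence m1V: "m1 * W^2 = m2" unfolding WV using V0 by (simp add: field_simps power2_eq_square)
  have "m1 * A1^2 + m2 * A2^2 + m1 * A3^2 + m2 * A4^2 + m1 * A5^2 + m2 * T^2
     = m2 * (T^2 + A4^2 + A2^2) + m1 * (A3^2 + A1^2 + A5^2)" by (simp add: algebra_simps)
  also have "\<dots> = m2*(6+9*V^2) + m1*(6+9*W^2)" using s1(2) s2(2) by simp
  also have "\<dots> = 15*(m1+m2)" using \<open>m2 * V^2 = m1\<close> m1V by (simp add: algebra_simps)
  finally show ?thesis .
qed



lemma alg4:
  fixes T m1 m2 :: real
  assumes T0: "T \<noteq> 0" and d1: "-1 - T*1 \<noteq> 0" and d3: "1 - T*1 \<noteq> 0"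
    and h: "m1 * A1 + m2 * A2 + m1 * A3 + m2 * T = 0"
    and A1: "A1 = (T*(-1)+1)/(-1-T*1)" and A2: "A2 = (T*0+1)/(0-T*1)"
    and A3: "A3 = (T*1+1)/(1-T*1)"
  shows "m1 * A1^2 + m2 * A2^2 + m1 * A3^2 + m2 * T^2 = 6*(m1+m2)"
proof -
  define W where "W = T - 1/T"
  have p1: "1 + T \<noteq> 0" using d1 by (simp add: algebra_simps)
  have p3: "1 - T \<noteq> 0" using d3 by simp
  have W0: "W \<noteq> 0"
  proof
    assume "W = 0"
    hence "T*T = 1" unfolding W_def using T0 by (simp add: field_simps)
    hence "(1+T)*(1-T) = 0" by (simp add: algebra_simps)
    thus False using p1 p3 by simp
  qed
  have A2': "A2 = -1/T" unfolding A2 by simp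
  have tt: "T*T - 1 \<noteq> 0"
  proof
    assume "T*T - 1 = 0"
    hence "(1+T)*(1-T) = 0" by (simp add: algebra_simps)
    thus False using p1 p3 by simp
  qed
  have A13: "A1 * A3 = -1" unfolding A1 A3 using p1 p3 tt
    by (simp add: field_simps) (simp add: algebra_simps)?
  have A13s: "A1 + A3 = -4/W" unfolding A1 A3 W_def using p1 p3 T0 tt
    by (simp add: field_simps) (simp add: algebra_simps)?
  have e1: "T + A2 = W" unfolding A2' W_def by simp
  have e2: "T^2 + A2^2 = W^2 + 2" unfolding A2' W_def using T0 by (simp add: field_simps power2_eq_square)
  have e3: "A1^2 + A3^2 = 16/W^2 + 2"
  proof -
    have "A1^2 + A3^2 = (A1+A3)^2 - 2*(A1*A3)" by (simp add: power2_eq_square algebra_simps)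
    also have "\<dots> = 16/W^2 + 2" unfolding A13 A13s by (simp add: power2_eq_square)
    finally show ?thesis .
  qed
  have "m1*(A1+A3) + m2*(T+A2) = 0" using h by (simp add: algebra_simps)
  hence "m1*(-4/W) + m2*W = 0" unfolding A13s e1 .
  hence hw: "m2 * W^2 = 4*m1" using W0 by (simp add: field_simps power2_eq_square)
  have hw2: "m1 * (16/W^2) = 4*m2"
  proof -
    have "m1 * (16/W^2) = (4*m1) * 4 / W^2" by simp
    also have "\<dots> = (m2 * W^2) * 4 / W^2" unfolding hw ..
    also have "\<dots> = 4*m2" using W0 by simp
    finally show ?thesis .
  qed
  have "m1 * A1^2 + m2 * A2^2 + m1 * A3^2 + m2 * T^2 = m1*(A1^2+A3^2) + m2*(T^2+A2^2)"
    by (simp add: algebra_simps)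
  also have "\<dots> = m1 * (16/W^2) + m2*W^2 + 2*m1 + 2*m2" unfolding e2 e3 by (simp add: algebra_simps)
  also have "\<dots> = 6*(m1+m2)" unfolding hw hw2 by simp
  finally show ?thesis .
qed

lemma alg2:
  fixes T m1 m2 :: real
  assumes T0: "T \<noteq> 0"
    and h: "m1 * A1 + m2 * T = 0" and A1: "A1 = (T*0+1)/(0-T*1)"
  shows "m1 * A1^2 + m2 * T^2 = m1 + m2"
proof -
  have A1': "A1 = -1/T" unfolding A1 by simp
  from h have "m2 * T^2 = m1" unfolding A1' using T0 by (simp add: field_simps power2_eq_square)
  hence "m1 * (1/T^2) = m2" using T0 by (simp add: field_simps power2_eq_square)
  moreover have "A1^2 = 1/T^2" unfolding A1' by (simp add: power2_eq_square)
  ultimately show ?thesis using \<open>m2 * T^2 = m1\<close> by simp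
qed

lemma alg3:
  fixes T q m :: real
  assumes q2: "q^2 = 3" and m0: "m \<noteq> 0" and d1: "1 - q*T \<noteq> 0" and d2: "1 + q*T \<noteq> 0"
    and h: "m * A1 + m * A2 + m * T = 0"
    and A1: "A1 = (T*(-1)+q)/(-1-T*q)" and A2: "A2 = (T*1+q)/(1-T*q)"
  shows "m * A1^2 + m * A2^2 + m * T^2 = 6*m"
proof -
  have A2': "A2 = (T+q)/(1-q*T)" unfolding A2 by (simp add: mult.commute)
  have A1': "A1 = (T-q)/(1+q*T)" unfolding A1 using d2
    by (simp add: field_simps) (simp add: algebra_simps)?
  define V where "V = T*(3-T^2)/(1-3*T^2)"
  have s1: "T + A2 + A1 = 3*V" "T^2 + A2^2 + A1^2 = 6 + 9*V^2"
    using grp3[OF q2 d1 d2] unfolding A2' A1' V_def by simp_all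
  have "m * (3*V) = m*(T + A2 + A1)" using s1(1) by simp
  also have "\<dots> = 0" using h by (simp add: algebra_simps)
  finally have "m * (3*V) = 0" .
  hence "V = 0" using m0 by simp
  have "m * A1^2 + m * A2^2 + m * T^2 = m * (T^2 + A2^2 + A1^2)" by (simp add: algebra_simps)
  thus ?thesis using s1(2) \<open>V = 0\<close> by simp
qed



lemma key6:
  fixes m1 m2 n g :: nat and t :: real
  assumes g6: "g = 6" and mn: "(m1 + m2) * g = 2 * n" and t: "0 < t" "t < pi / real g"
    and h: "(\<Sum>k=1..g. real (mult m1 m2 k) * tan (t + pi/2 - real k*pi/real g)) = 0"
  shows "(\<Sum>k=1..g. real (mult m1 m2 k) * (tan (t + pi/2 - real k*pi/real g))^2) = real n * (real g - 1)"
proof -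
  define a where "a = t - pi/2"
  define F where "F k = tan (t + pi/2 - real k*pi/real g)" for k :: nat
  have ca: "cos a \<noteq> 0" unfolding a_def using setup_lem(1)[OF t] g6 by simp
  have cph: "\<And>k. 1 \<le> k \<Longrightarrow> k \<le> g \<Longrightarrow> cos (t + pi/2 - real k*pi/real g) \<noteq> 0"
    using setup_lem(2)[OF t] g6 by simp
  have set6: "{1..g} = {1,2,3,4,5,6}" using g6 by auto
  have S: "\<And>G :: nat \<Rightarrow> real. (\<Sum>k=1..g. real (mult m1 m2 k) * G k)
     = m1*G 1 + m2*G 2 + m1*G 3 + m2*G 4 + m1*G 5 + m2*G 6"
    unfolding set6 by (simp add: mult_def algebra_simps)
  have F1: "F 1 = (tan a * (- sqrt 3) + 1)/(- sqrt 3 - tan a * 1) \<and> - sqrt 3 - tan a * 1 \<noteq> 0"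
    unfolding F_def by (rule shift_inst[OF ca _ cs56]) (use cph[of 1] in \<open>simp_all add: a_def g6\<close>)
  have F2: "F 2 = (tan a * (- 1) + sqrt 3)/(- 1 - tan a * sqrt 3) \<and> - 1 - tan a * sqrt 3 \<noteq> 0"
    unfolding F_def by (rule shift_inst[OF ca _ cs23]) (use cph[of 2] in \<open>simp_all add: a_def g6\<close>)
  have F3: "F 3 = (tan a * 0 + 1)/(0 - tan a * 1) \<and> 0 - tan a * 1 \<noteq> 0"
    unfolding F_def by (rule shift_inst[OF ca _ cs12]) (use cph[of 3] in \<open>simp_all add: a_def g6\<close>)
  have F4: "F 4 = (tan a * 1 + sqrt 3)/(1 - tan a * sqrt 3) \<and> 1 - tan a * sqrt 3 \<noteq> 0"
    unfolding F_def by (rule shift_inst[OF ca _ cs13]) (use cph[of 4] in \<open>simp_all add: a_def g6\<close>)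
  have F5: "F 5 = (tan a * sqrt 3 + 1)/(sqrt 3 - tan a * 1) \<and> sqrt 3 - tan a * 1 \<noteq> 0"
    unfolding F_def by (rule shift_inst[OF ca _ cs16]) (use cph[of 5] in \<open>simp_all add: a_def g6\<close>)
  have F6: "F 6 = tan a" unfolding F_def a_def g6 by simp
  have h': "m1 * F 1 + m2 * F 2 + m1 * F 3 + m2 * F 4 + m1 * F 5 + m2 * tan a = 0"
    using h S[of F] unfolding F_def[symmetric] F6 by simp
  have "(\<Sum>k=1..g. real (mult m1 m2 k) * (tan (t + pi/2 - real k*pi/real g))^2)
     = m1 * (F 1)^2 + m2 * (F 2)^2 + m1 * (F 3)^2 + m2 * (F 4)^2 + m1 * (F 5)^2 + m2 * (tan a)^2"
    using S[of "\<lambda>k. (F k)^2"] unfolding F_def[symmetric] F6 by simp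
  also have "\<dots> = 15 * (real m1 + real m2)"
  proof (rule alg6[OF _ _ _ _ _ _ h'])
    show "sqrt 3 ^ 2 = (3::real)" by simp
    show "tan a \<noteq> 0" using F3 by simp
    show "1 - sqrt 3 * tan a \<noteq> 0" using F4 by (simp add: mult.commute)
    show "1 + sqrt 3 * tan a \<noteq> 0" using F2 by (simp add: algebra_simps) (metis add.commute add_eq_0_iff mult.commute)?
    show "sqrt 3 + tan a \<noteq> 0" using F1 by (simp add: algebra_simps) (metis add.commute add_eq_0_iff)?
    show "sqrt 3 - tan a \<noteq> 0" using F5 by simp
  qed (use F1 F2 F3 F4 F5 in simp_all)
  also have "\<dots> = real n * (real g - 1)"
  proof -
    have "real ((m1 + m2) * g) = real (2 * n)" using mn by (simp only:)
    thus ?thesis using g6 by simp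
  qed
  finally show ?thesis .
qed



lemma key4:
  fixes m1 m2 n g :: nat and t :: real
  assumes g4: "g = 4" and mn: "(m1 + m2) * g = 2 * n" and t: "0 < t" "t < pi / real g"
    and h: "(\<Sum>k=1..g. real (mult m1 m2 k) * tan (t + pi/2 - real k*pi/real g)) = 0"
  shows "(\<Sum>k=1..g. real (mult m1 m2 k) * (tan (t + pi/2 - real k*pi/real g))^2) = real n * (real g - 1)"
proof -
  define a where "a = t - pi/2"
  define F where "F k = tan (t + pi/2 - real k*pi/real g)" for k :: nat
  have ca: "cos a \<noteq> 0" unfolding a_def using setup_lem(1)[OF t] g4 by simp
  have cph: "\<And>k. 1 \<le> k \<Longrightarrow> k \<le> g \<Longrightarrow> cos (t + pi/2 - real k*pi/real g) \<noteq> 0"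
    using setup_lem(2)[OF t] g4 by simp
  have set4: "{1..g} = {1,2,3,4}" using g4 by auto
  have S: "\<And>G :: nat \<Rightarrow> real. (\<Sum>k=1..g. real (mult m1 m2 k) * G k)
     = m1*G 1 + m2*G 2 + m1*G 3 + m2*G 4"
    unfolding set4 by (simp add: mult_def algebra_simps)
  have F1: "F 1 = (tan a * (- 1) + 1)/(- 1 - tan a * 1) \<and> - 1 - tan a * 1 \<noteq> 0"
    unfolding F_def by (rule shift_inst[OF ca _ cs34]) (use cph[of 1] in \<open>simp_all add: a_def g4\<close>)
  have F2: "F 2 = (tan a * 0 + 1)/(0 - tan a * 1) \<and> 0 - tan a * 1 \<noteq> 0"
    unfolding F_def by (rule shift_inst[OF ca _ cs12]) (use cph[of 2] in \<open>simp_all add: a_def g4\<close>)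
  have F3: "F 3 = (tan a * 1 + 1)/(1 - tan a * 1) \<and> 1 - tan a * 1 \<noteq> 0"
    unfolding F_def by (rule shift_inst[OF ca _ cs14]) (use cph[of 3] in \<open>simp_all add: a_def g4\<close>)
  have F4: "F 4 = tan a" unfolding F_def a_def g4 by simp
  have h': "m1 * F 1 + m2 * F 2 + m1 * F 3 + m2 * tan a = 0"
    using h S[of F] unfolding F_def[symmetric] F4 by simp
  have "(\<Sum>k=1..g. real (mult m1 m2 k) * (tan (t + pi/2 - real k*pi/real g))^2)
     = m1 * (F 1)^2 + m2 * (F 2)^2 + m1 * (F 3)^2 + m2 * (tan a)^2"
    using S[of "\<lambda>k. (F k)^2"] unfolding F_def[symmetric] F4 by simp
  also have "\<dots> = 6 * (real m1 + real m2)"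
  proof (rule alg4[OF _ _ _ h'])
    show "tan a \<noteq> 0" using F2 by simp
    show "- 1 - tan a * 1 \<noteq> 0" using F1 by simp
    show "1 - tan a * 1 \<noteq> 0" using F3 by simp
  qed (use F1 F2 F3 in simp_all)
  also have "\<dots> = real n * (real g - 1)"
  proof -
    have "real ((m1 + m2) * g) = real (2 * n)" using mn by (simp only:)
    thus ?thesis using g4 by simp
  qed
  finally show ?thesis .
qed

lemma key3:
  fixes m1 m2 n g :: nat and t :: real
  assumes g3: "g = 3" and mm: "m1 = m2" and m1: "1 \<le> m1" and mn: "(m1 + m2) * g = 2 * n" and t: "0 < t" "t < pi / real g"
    and h: "(\<Sum>k=1..g. real (mult m1 m2 k) * tan (t + pi/2 - real k*pi/real g)) = 0"
  shows "(\<Sum>k=1..g. real (mult m1 m2 k) * (tan (t + pi/2 - real k*pi/real g))^2) = real n * (real g - 1)"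
proof -
  define a where "a = t - pi/2"
  define F where "F k = tan (t + pi/2 - real k*pi/real g)" for k :: nat
  have ca: "cos a \<noteq> 0" unfolding a_def using setup_lem(1)[OF t] g3 by simp
  have cph: "\<And>k. 1 \<le> k \<Longrightarrow> k \<le> g \<Longrightarrow> cos (t + pi/2 - real k*pi/real g) \<noteq> 0"
    using setup_lem(2)[OF t] g3 by simp
  have set3: "{1..g} = {1,2,3}" using g3 by auto
  have S: "\<And>G :: nat \<Rightarrow> real. (\<Sum>k=1..g. real (mult m1 m2 k) * G k)
     = m1*G 1 + m1*G 2 + m1*G 3"
    unfolding set3 using mm by (simp add: mult_def algebra_simps)
  have F1: "F 1 = (tan a * (- 1) + sqrt 3)/(- 1 - tan a * sqrt 3) \<and> - 1 - tan a * sqrt 3 \<noteq> 0"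
    unfolding F_def by (rule shift_inst[OF ca _ cs23]) (use cph[of 1] in \<open>simp_all add: a_def g3\<close>)
  have F2: "F 2 = (tan a * 1 + sqrt 3)/(1 - tan a * sqrt 3) \<and> 1 - tan a * sqrt 3 \<noteq> 0"
    unfolding F_def by (rule shift_inst[OF ca _ cs13]) (use cph[of 2] in \<open>simp_all add: a_def g3\<close>)
  have F3: "F 3 = tan a" unfolding F_def a_def g3 by simp
  have h': "m1 * F 1 + m1 * F 2 + m1 * tan a = 0"
    using h S[of F] unfolding F_def[symmetric] F3 by simp
  have "(\<Sum>k=1..g. real (mult m1 m2 k) * (tan (t + pi/2 - real k*pi/real g))^2)
     = m1 * (F 1)^2 + m1 * (F 2)^2 + m1 * (tan a)^2"
    using S[of "\<lambda>k. (F k)^2"] unfolding F_def[symmetric] F3 by simp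
  also have "\<dots> = 6 * real m1"
  proof (rule alg3[OF _ _ _ _ h'])
    show "sqrt 3 ^ 2 = (3::real)" by simp
    show "real m1 \<noteq> 0" using m1 by simp
    show "1 - sqrt 3 * tan a \<noteq> 0" using F2 by (simp add: mult.commute)
    show "1 + sqrt 3 * tan a \<noteq> 0" using F1 by (simp add: algebra_simps) (metis add.commute add_eq_0_iff mult.commute)?
  qed (use F1 F2 in simp_all)
  also have "\<dots> = real n * (real g - 1)"
  proof -
    have "real ((m1 + m2) * g) = real (2 * n)" using mn by (simp only:)
    thus ?thesis using g3 mm by simp
  qed
  finally show ?thesis .
qed

lemma key2:
  fixes m1 m2 n g :: nat and t :: real
  assumes g2: "g = 2" and mn: "(m1 + m2) * g = 2 * n" and t: "0 < t" "t < pi / real g"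
    and h: "(\<Sum>k=1..g. real (mult m1 m2 k) * tan (t + pi/2 - real k*pi/real g)) = 0"
  shows "(\<Sum>k=1..g. real (mult m1 m2 k) * (tan (t + pi/2 - real k*pi/real g))^2) = real n * (real g - 1)"
proof -
  define a where "a = t - pi/2"
  define F where "F k = tan (t + pi/2 - real k*pi/real g)" for k :: nat
  have ca: "cos a \<noteq> 0" unfolding a_def using setup_lem(1)[OF t] g2 by simp
  have cph: "\<And>k. 1 \<le> k \<Longrightarrow> k \<le> g \<Longrightarrow> cos (t + pi/2 - real k*pi/real g) \<noteq> 0"
    using setup_lem(2)[OF t] g2 by simp
  have set2: "{1..g} = {1,2}" using g2 by auto
  have S: "\<And>G :: nat \<Rightarrow> real. (\<Sum>k=1..g. real (mult m1 m2 k) * G k)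
     = m1*G 1 + m2*G 2"
    unfolding set2 by (simp add: mult_def algebra_simps)
  have F1: "F 1 = (tan a * 0 + 1)/(0 - tan a * 1) \<and> 0 - tan a * 1 \<noteq> 0"
    unfolding F_def by (rule shift_inst[OF ca _ cs12]) (use cph[of 1] in \<open>simp_all add: a_def g2\<close>)
  have F2: "F 2 = tan a" unfolding F_def a_def g2 by simp
  have h': "m1 * F 1 + m2 * tan a = 0"
    using h S[of F] unfolding F_def[symmetric] F2 by simp
  have "(\<Sum>k=1..g. real (mult m1 m2 k) * (tan (t + pi/2 - real k*pi/real g))^2)
     = m1 * (F 1)^2 + m2 * (tan a)^2"
    using S[of "\<lambda>k. (F k)^2"] unfolding F_def[symmetric] F2 by simp
  also have "\<dots> = real m1 + real m2"
    by (rule alg2[OF _ h']) (use F1 in simp_all)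
  also have "\<dots> = real n * (real g - 1)"
  proof -
    have "real ((m1 + m2) * g) = real (2 * n)" using mn by (simp only:)
    thus ?thesis using g2 by simp
  qed
  finally show ?thesis .
qed

lemma key1:
  fixes m1 m2 n g :: nat and t :: real
  assumes g1: "g = 1" and m1: "1 \<le> m1" and t: "0 < t" "t < pi / real g"
    and h: "(\<Sum>k=1..g. real (mult m1 m2 k) * tan (t + pi/2 - real k*pi/real g)) = 0"
  shows "(\<Sum>k=1..g. real (mult m1 m2 k) * (tan (t + pi/2 - real k*pi/real g))^2) = real n * (real g - 1)"
proof -
  have e: "t + pi/2 - real (1::nat)*pi/real g = t - pi/2" using g1 by simp
  have "real m1 * tan (t - pi/2) = 0" using h g1 e by (simp add: mult_def)
  hence "tan (t - pi/2) = 0" using m1 by simp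
  thus ?thesis using g1 e by (simp add: mult_def)
qed



lemma keyall:
  fixes m1 m2 n g :: nat and t :: real
  assumes g: "g \<in> {1, 2, 3, 4, 6}" and m1: "1 \<le> m1" and odd: "odd g \<Longrightarrow> m1 = m2"
    and mn: "(m1 + m2) * g = 2 * n" and t: "0 < t" "t < pi / real g"
    and h: "(\<Sum>k=1..g. real (mult m1 m2 k) * tan (t + pi/2 - real k*pi/real g)) = 0"
  shows "(\<Sum>k=1..g. real (mult m1 m2 k) * (tan (t + pi/2 - real k*pi/real g))^2) = real n * (real g - 1)"
proof -
  from g consider "g = 1" | "g = 2" | "g = 3" | "g = 4" | "g = 6" by auto
  thus ?thesis
  proof cases
    case 1 thus ?thesis using key1 m1 t h by blast
  next
    case 2 thus ?thesis using key2 mn t h by blast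
  next
    case 3 thus ?thesis using key3 odd m1 mn t h by simp
  next
    case 4 thus ?thesis using key4 mn t h by blast
  next
    case 5 thus ?thesis using key6 mn t h by blast
  qed
qed

lemma dimsum:
  fixes m1 m2 n g :: nat
  assumes g: "g \<in> {1, 2, 3, 4, 6}" and odd: "odd g \<Longrightarrow> m1 = m2" and mn: "(m1 + m2) * g = 2 * n"
  shows "(\<Sum>k=1..g. real (mult m1 m2 k)) = real n"
proof -
  have "real ((m1 + m2) * g) = real (2 * n)" using mn by (simp only:)
  hence mn': "(real m1 + real m2) * real g = 2 * real n" by simp
  from g consider "g = 1" | "g = 2" | "g = 3" | "g = 4" | "g = 6" by auto
  thus ?thesis
  proof cases
    assume g1: "g = 1"
    have "{1..g} = {1}" using g1 by auto
    thus ?thesis using g1 odd mn' by (simp add: mult_def)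
  next
    assume g1: "g = 2"
    have "{1..g} = {1,2}" using g1 by auto
    thus ?thesis using g1 mn' by (simp add: mult_def)
  next
    assume g1: "g = 3"
    have "{1..g} = {1,2,3}" using g1 by auto
    thus ?thesis using g1 odd mn' by (simp add: mult_def)
  next
    assume g1: "g = 4"
    have "{1..g} = {1,2,3,4}" using g1 by auto
    thus ?thesis using g1 mn' by (simp add: mult_def)
  next
    assume g1: "g = 6"
    have "{1..g} = {1,2,3,4,5,6}" using g1 by auto
    thus ?thesis using g1 mn' by (simp add: mult_def)
  qed
qed

lemma inner_rcis_cis: "rcis \<rho> t \<bullet> cis s = \<rho> * cos (t - s)"
  by (simp add: inner_complex_def cos_diff algebra_simps)

lemma eig_form:
  assumes "\<rho> > 0"
  shows "shape_eig g (rcis \<rho> t) \<xi> k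
     = - (\<xi> \<bullet> cis (real k * pi / real g - pi / 2)) / (\<rho> * cos (t + pi/2 - real k*pi/real g))"
proof -
  have e: "t - (real k * pi / real g - pi / 2) = t + pi/2 - real k*pi/real g" by simp
  show ?thesis unfolding shape_eig_def alpha_def inner_rcis_cis e
    by (simp add: inner_complex_def, simp add: diff_divide_distrib)
qed



theorem corollary4p8:
  fixes g m1 m2 n :: nat and r \<theta> :: real
  assumes "g \<in> {1, 2, 3, 4, 6}"
    and "1 \<le> m1" and "m1 \<le> m2"
    and "odd g \<Longrightarrow> m1 = m2"
    and "(m1 + m2) * g = 2 * n"
    and "rcis r \<theta> \<in> weyl_chamber g"
    and "mean_curv_S g m1 m2 (rcis r \<theta>) = 0"
  shows "normsq_AE g m1 m2 (rcis r \<theta>) = real n * real g / r^2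
       \<and> normsq_AS g m1 m2 (rcis r \<theta>) = real n / r^2 * (real g - 1)"
proof -
  note g = assms(1) and m1 = assms(2) and odd = assms(4) and mn = assms(5)
  obtain \<rho> t where x: "rcis r \<theta> = rcis \<rho> t" and rho: "\<rho> > 0" and t: "0 < t" "t < pi / real g"
    using assms(6) unfolding weyl_chamber_def by auto
  have g1: "g \<ge> 1" using g by auto
  have r2: "r^2 = \<rho>^2"
  proof -
    have "cmod (rcis r \<theta>) = cmod (rcis \<rho> t)" using x by simp
    hence "\<bar>r\<bar> = \<bar>\<rho>\<bar>" by simp
    thus ?thesis by (metis power2_abs)
  qed
  define \<phi> where "\<phi> k = t + pi/2 - real k*pi/real g" for k :: nat
  define th where "th k = real k * pi / real g - pi / 2" for k :: nat
  define mk where "mk k = real (mult m1 m2 k)" for k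
  have cph: "\<And>k. k \<in> {1..g} \<Longrightarrow> cos (\<phi> k) \<noteq> 0"
    unfolding \<phi>_def using setup_lem(2)[OF t g1] by auto
  have eig: "\<And>\<xi> k. shape_eig g (rcis \<rho> t) \<xi> k = - (\<xi> \<bullet> cis (th k)) / (\<rho> * cos (\<phi> k))"
    unfolding \<phi>_def th_def by (rule eig_form[OF rho])
  have dimn: "(\<Sum>k=1..g. mk k) = real n" unfolding mk_def by (rule dimsum[OF g odd mn])
  have termE: "\<And>k. k \<in> {1..g} \<Longrightarrow>
      (shape_eig g (rcis \<rho> t) 1 k)^2 + (shape_eig g (rcis \<rho> t) \<i> k)^2 = (1 + (tan (\<phi> k))^2) / \<rho>^2"
  proof -
    fix k assume k: "k \<in> {1..g}"
    have c: "cos (\<phi> k) \<noteq> 0" using cph[OF k] .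
    have "(shape_eig g (rcis \<rho> t) 1 k)^2 + (shape_eig g (rcis \<rho> t) \<i> k)^2
        = (cos (th k))^2 / (\<rho> * cos (\<phi> k))^2 + (sin (th k))^2 / (\<rho> * cos (\<phi> k))^2"
      unfolding eig by (simp add: inner_complex_def power_divide)
    also have "\<dots> = ((cos (th k))^2 + (sin (th k))^2) / (\<rho> * cos (\<phi> k))^2"
      by (simp only: add_divide_distrib)
    also have "\<dots> = 1 / (\<rho> * cos (\<phi> k))^2" by (simp only: sin_cos_squared_add2)
    also have "\<dots> = (1 + (tan (\<phi> k))^2) / \<rho>^2"
    proof -
      have "1 + (tan (\<phi> k))^2 = 1 / (cos (\<phi> k))^2"
        using c sin_cos_squared_add[of "\<phi> k"] by (simp add: tan_def field_simps)
      thus ?thesis by (simp add: power_mult_distrib)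
    qed
    finally show "(shape_eig g (rcis \<rho> t) 1 k)^2 + (shape_eig g (rcis \<rho> t) \<i> k)^2 = (1 + (tan (\<phi> k))^2) / \<rho>^2" .
  qed
  have eta: "\<And>k. k \<in> {1..g} \<Longrightarrow> shape_eig g (rcis \<rho> t) (sphere_normal (rcis \<rho> t)) k = tan (\<phi> k) / \<rho>"
  proof -
    fix k assume k: "k \<in> {1..g}"
    have c: "cos (\<phi> k) \<noteq> 0" using cph[OF k] .
    have "sphere_normal (rcis \<rho> t) \<bullet> cis (th k) = - sin (\<phi> k)"
    proof -
      have sn: "sphere_normal (rcis \<rho> t) = \<i> * rcis \<rho> t / complex_of_real \<rho>"
        unfolding sphere_normal_def using rho by simp
      have "\<phi> k = t - th k" unfolding \<phi>_def th_def by simp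
      hence sd: "sin (\<phi> k) = sin t * cos (th k) - cos t * sin (th k)" by (simp add: sin_diff)
      show ?thesis unfolding sn sd using rho by (simp add: inner_complex_def algebra_simps)
    qed
    thus "shape_eig g (rcis \<rho> t) (sphere_normal (rcis \<rho> t)) k = tan (\<phi> k) / \<rho>"
      unfolding eig using rho by (simp add: tan_def)
  qed
  have trace: "shape_trace g m1 m2 (rcis \<rho> t) (sphere_normal (rcis \<rho> t)) = (\<Sum>k=1..g. mk k * tan (\<phi> k)) / \<rho>"
    unfolding shape_trace_def mk_def sum_divide_distrib by (rule sum.cong) (simp_all add: eta)
  have dimM: "dimM g m1 m2 = n"
  proof -
    have "real (dimM g m1 m2) = real n" unfolding dimM_def using dimn unfolding mk_def by simp
    thus ?thesis by simp
  qed
  have n0: "n \<noteq> 0"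
  proof
    assume "n = 0"
    hence "(m1 + m2) * g = 0" using mn by simp
    thus False using m1 g1 by simp
  qed
  have sn0: "sphere_normal (rcis \<rho> t) \<noteq> 0" unfolding sphere_normal_def using rho by simp
  have "shape_trace g m1 m2 (rcis \<rho> t) (sphere_normal (rcis \<rho> t)) = 0"
    using assms(7) unfolding x mean_curv_S_def dimM using sn0 n0 by simp
  hence htan: "(\<Sum>k=1..g. mk k * tan (\<phi> k)) = 0" unfolding trace using rho by simp
  have key: "(\<Sum>k=1..g. mk k * (tan (\<phi> k))^2) = real n * (real g - 1)"
    using keyall[OF g m1 odd mn t] htan unfolding mk_def \<phi>_def by simp
  have AE: "normsq_AE g m1 m2 (rcis \<rho> t) = real n * real g / \<rho>^2"
  proof -
    have "normsq_AE g m1 m2 (rcis \<rho> t) = (\<Sum>k=1..g. mk k * ((shape_eig g (rcis \<rho> t) 1 k)^2 + (shape_eig g (rcis \<rho> t) \<i> k)^2))"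
      unfolding normsq_AE_def hs_sq_def Basis_complex_def mk_def
      by (simp add: sum.distrib distrib_left)
    also have "\<dots> = (\<Sum>k=1..g. mk k * (1 + (tan (\<phi> k))^2) / \<rho>^2)"
      by (rule sum.cong) (simp_all add: termE)
    also have "\<dots> = ((\<Sum>k=1..g. mk k) + (\<Sum>k=1..g. mk k * (tan (\<phi> k))^2)) / \<rho>^2"
      by (simp add: sum_divide_distrib[symmetric] sum.distrib distrib_left)
    also have "\<dots> = real n * real g / \<rho>^2" unfolding dimn key by (simp add: algebra_simps)
    finally show ?thesis .
  qed
  have AS: "normsq_AS g m1 m2 (rcis \<rho> t) = real n / \<rho>^2 * (real g - 1)"
  proof -
    have "normsq_AS g m1 m2 (rcis \<rho> t) = (\<Sum>k=1..g. mk k * (tan (\<phi> k))^2) / \<rho>^2"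
      unfolding normsq_AS_def hs_sq_def mk_def sum_divide_distrib
      by (rule sum.cong) (simp_all add: eta power_divide)
    thus ?thesis unfolding key by simp
  qed
  show ?thesis unfolding x r2 using AE AS by simp
qed

end
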